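(* Let $p\geq 5$ be an odd integer and $s=\frac2p$. For any even integer $n\geq 4$, \[ 2\left(n-\tfrac12\right)^s=2\left(n^2-n+\tfrac14\right)^{s/2}<A_{n,s}^{-1}<2\left(n^2-n+\tfrac34\right)^{s/2}, \] and for any odd integer $n\geq 3$, \[ -2\left(n^2-n+\tfrac34\right)^{s/2}<B_{n,s}^{-1}<-2\left(n^2-n+\tfrac14\right)^{s/2}=-2\left(n-\tfrac12\right)^s. \]
   Context: For an integer $n\geq1$ and real $0<s<1$: $A_{n,s}=\left(\frac{1}{n^s}-\frac{1}{(n+1)^s}\right)+\left(\frac{1}{(n+2)^s}-\frac{1}{(n+3)^s}\right)+\cdots$ and $B_{n,s}=\left(-\frac{1}{n^s}+\frac{1}{(n+1)^s}\right)+\left(-\frac{1}{(n+2)^s}+\frac{1}{(n+3)^s}\right)+\cdots$. *)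

theory Defs
  imports "HOL-Analysis.Analysis"
begin

definition A_ns :: "nat \<Rightarrow> real \<Rightarrow> real" where
  "A_ns n s = (\<Sum>k. 1 / real (n + 2*k) powr s - 1 / real (n + 2*k + 1) powr s)"

definition B_ns :: "nat \<Rightarrow> real \<Rightarrow> real" where
  "B_ns n s = (\<Sum>k. - 1 / real (n + 2*k) powr s + 1 / real (n + 2*k + 1) powr s)"

end

theory Submission
  imports Defs
begin


definition dpw :: "real \<Rightarrow> nat \<Rightarrow> real \<Rightarrow> real" where
  "dpw \<sigma> m y = (-1)^m * pochhammer \<sigma> m * y powr (-\<sigma> - real m)"

lemma dpw_deriv:
  assumes "t > 0"
  shows "DERIV (dpw \<sigma> m) t :> dpw \<sigma> (Suc m) t"
proof -
  have "DERIV (\<lambda>y. (-1)^m * pochhammer \<sigma> m * y powr (-\<sigma> - real m)) t :>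
      (-1)^m * pochhammer \<sigma> m * ((-\<sigma> - real m) * t powr (-\<sigma> - real m - 1))"
    by (rule derivative_eq_intros refl | use assms in simp)+
  moreover have "(-1)^m * pochhammer \<sigma> m * ((-\<sigma> - real m) * t powr (-\<sigma> - real m - 1))
      = dpw \<sigma> (Suc m) t"
    unfolding dpw_def by (simp add: pochhammer_rec' algebra_simps)
  ultimately show ?thesis unfolding dpw_def[abs_def] by simp
qed

lemma dpw0: "dpw \<sigma> 0 = (\<lambda>y. y powr (-\<sigma>))"
  by (simp add: dpw_def fun_eq_iff)

lemma taylor_up_powr:
  fixes \<sigma> h c :: real
  assumes "c > 0" "h > 0" "N > 0"
  shows "\<exists>t. c < t \<and> t < c + h \<and> (c+h) powr (-\<sigma>) =
     (\<Sum>m<N. dpw \<sigma> m c / fact m * h^m) + dpw \<sigma> N t / fact N * h^N"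
proof -
  have "\<exists>t. c < t \<and> t < c + h \<and> (c+h) powr (-\<sigma>) =
     (\<Sum>m<N. dpw \<sigma> m c / fact m * (c + h - c)^m) + dpw \<sigma> N t / fact N * (c + h - c)^N"
    by (rule Taylor_up[where a = c and diff = "dpw \<sigma>"])
       (use assms in \<open>auto simp: dpw0 intro!: dpw_deriv\<close>)
  then show ?thesis by simp
qed

lemma taylor_down_powr:
  fixes \<sigma> h c :: real
  assumes "c - h > 0" "h > 0" "N > 0"
  shows "\<exists>t. c - h < t \<and> t < c \<and> (c-h) powr (-\<sigma>) =
     (\<Sum>m<N. dpw \<sigma> m c / fact m * (-h)^m) + dpw \<sigma> N t / fact N * (-h)^N"
proof -
  have "\<exists>t. c - h < t \<and> t < c \<and> (c-h) powr (-\<sigma>) =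
     (\<Sum>m<N. dpw \<sigma> m c / fact m * (c - h - c)^m) + dpw \<sigma> N t / fact N * (c - h - c)^N"
    by (rule Taylor_down[where b = c and diff = "dpw \<sigma>"])
       (use assms in \<open>auto simp: dpw0 intro!: dpw_deriv\<close>)
  then show ?thesis by simp
qed

lemma sum7: "(\<Sum>m<(7::nat). f m) = f 0 + f 1 + f 2 + f 3 + f 4 + f 5 + (f 6 :: real)"
  by (simp add: numeral_eq_Suc)

lemma sym7:
  fixes \<sigma> \<delta> c :: real
  assumes "\<sigma> > 0" "\<delta> > 0" "c - \<delta> > 0"
  shows "\<exists>R. (c-\<delta>) powr (-\<sigma>) - (c+\<delta>) powr (-\<sigma>) = 2*\<delta>*\<sigma> * c powr (-\<sigma>-1)
     + \<delta>^3/3 * pochhammer \<sigma> 3 * c powr (-\<sigma>-3) + \<delta>^5/60 * pochhammer \<sigma> 5 * c powr (-\<sigma>-5) + R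
     \<and> 0 \<le> R \<and> R \<le> \<delta>^7/2520 * pochhammer \<sigma> 7 * (c-\<delta>) powr (-\<sigma>-7)"
proof -
  have c: "c > 0" using assms by linarith
  obtain t1 where t1: "c < t1" "t1 < c + \<delta>" and e1: "(c+\<delta>) powr (-\<sigma>) =
     (\<Sum>m<7. dpw \<sigma> m c / fact m * \<delta>^m) + dpw \<sigma> 7 t1 / fact 7 * \<delta>^7"
    using taylor_up_powr[OF c assms(2), of 7 \<sigma>] by auto
  obtain t2 where t2: "c - \<delta> < t2" "t2 < c" and e2: "(c-\<delta>) powr (-\<sigma>) =
     (\<Sum>m<7. dpw \<sigma> m c / fact m * (-\<delta>)^m) + dpw \<sigma> 7 t2 / fact 7 * (-\<delta>)^7"
    using taylor_down_powr[OF assms(3) assms(2), of 7 \<sigma>] by auto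
  define R where "R = pochhammer \<sigma> 7 * \<delta>^7 / 5040 * (t1 powr (-\<sigma>-7) + t2 powr (-\<sigma>-7))"
  have p7: "pochhammer \<sigma> 7 > 0" using assms(1) by (simp add: pochhammer_pos)
  have eq: "(c-\<delta>) powr (-\<sigma>) - (c+\<delta>) powr (-\<sigma>) = 2*\<delta>*\<sigma> * c powr (-\<sigma>-1)
     + \<delta>^3/3 * pochhammer \<sigma> 3 * c powr (-\<sigma>-3) + \<delta>^5/60 * pochhammer \<sigma> 5 * c powr (-\<sigma>-5) + R"
    unfolding e1 e2 sum7 R_def by (simp add: dpw_def fact_numeral algebra_simps)
  have "t1 powr (-\<sigma>-7) \<le> (c-\<delta>) powr (-\<sigma>-7)"
    by (rule powr_mono2') (use assms t1 in auto)
  moreover have "t2 powr (-\<sigma>-7) \<le> (c-\<delta>) powr (-\<sigma>-7)"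
    by (rule powr_mono2') (use assms t2 in auto)
  ultimately have "t1 powr (-\<sigma>-7) + t2 powr (-\<sigma>-7) \<le> 2 * (c-\<delta>) powr (-\<sigma>-7)" by (simp add: ac_simps)
  then have "R \<le> pochhammer \<sigma> 7 * \<delta>^7 / 5040 * (2 * (c-\<delta>) powr (-\<sigma>-7))"
    unfolding R_def using p7 assms by (intro mult_left_mono) auto
  then have "R \<le> \<delta>^7/2520 * pochhammer \<sigma> 7 * (c-\<delta>) powr (-\<sigma>-7)" by (simp add: ac_simps)
  moreover have "0 \<le> R" unfolding R_def using p7 assms by auto
  ultimately show ?thesis using eq by blast
qed


lemma bern_upper:
  fixes r w :: real
  assumes "r > 0" "w > 0"
  shows "(1+w) powr (-r) \<le> 1 - r*w + r*(r+1)/2*w^2"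
proof -
  obtain t where t: "1 < t" "t < 1 + w" and e: "(1+w) powr (-r) =
     (\<Sum>m<3. dpw r m 1 / fact m * w^m) + dpw r 3 t / fact 3 * w^3"
    using taylor_up_powr[of 1 w 3 r] assms by auto
  have "dpw r 3 t \<le> 0" unfolding dpw_def using assms t
    by (simp add: pochhammer_pos less_imp_le)
  then have "dpw r 3 t / fact 3 * w^3 \<le> 0" using assms
    by (simp add: mult_nonpos_nonneg divide_nonpos_pos)
  moreover have "(\<Sum>m<3. dpw r m 1 / fact m * w^m) = 1 - r*w + r*(r+1)/2*w^2"
    by (simp add: numeral_eq_Suc dpw_def pochhammer_Suc_prod fact_numeral algebra_simps)
  ultimately show ?thesis using e by linarith
qed

lemma bern_lower:
  fixes r w :: real
  assumes "r > 0" "w > 0"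
  shows "1 - r*w \<le> (1+w) powr (-r)"
proof -
  obtain t where t: "1 < t" "t < 1 + w" and e: "(1+w) powr (-r) =
     (\<Sum>m<2. dpw r m 1 / fact m * w^m) + dpw r 2 t / fact 2 * w^2"
    using taylor_up_powr[of 1 w 2 r] assms by auto
  have "dpw r 2 t \<ge> 0" unfolding dpw_def using assms t
    by (simp add: pochhammer_pos less_imp_le)
  then have "dpw r 2 t / fact 2 * w^2 \<ge> 0" using assms
    by simp
  moreover have "(\<Sum>m<2. dpw r m 1 / fact m * w^m) = 1 - r*w"
    by (simp add: numeral_eq_Suc dpw_def)
  ultimately show ?thesis using e by linarith
qed

lemma powr_minus_nat:
  fixes v a :: real
  assumes "v > 0"
  shows "v powr (a - real k) = v powr a / v ^ k"
  using assms by (simp add: powr_diff powr_realpow)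

lemma psi_split:
  fixes v s :: real
  assumes "v > 0"
  shows "(v^2+1/2) powr (-s/2) = v powr (-s) * (1 + 1/(2* v^2)) powr (-s/2)"
proof -
  have "v^2 + 1/2 = v^2 * (1 + 1/(2* v^2))" using assms by (simp add: field_simps)
  then have "(v^2+1/2) powr (-s/2) = (v^2) powr (-s/2) * (1 + 1/(2* v^2)) powr (-s/2)"
    by (simp add: powr_mult)
  moreover have "(v^2) powr (-s/2) = v powr (-s)"
  proof -
    have "v^2 = v powr 2" using assms by (simp add: powr_numeral)
    then have "(v^2) powr (-s/2) = (v powr 2) powr (-s/2)" by simp
    also have "\<dots> = v powr (-s)" by (simp add: powr_powr)
    finally show ?thesis .
  qed
  ultimately show ?thesis by simp
qed

lemma psi_upper:
  fixes v s :: real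
  assumes "v > 0" "s > 0"
  shows "(v^2+1/2) powr (-s/2) \<le> v powr (-s) - s/4 * v powr (-s-2) + s*(s+2)/32 * v powr (-s-4)"
proof -
  have b: "(1 + 1/(2* v^2)) powr (-(s/2)) \<le> 1 - (s/2)*(1/(2* v^2)) + (s/2)*(s/2+1)/2*(1/(2* v^2))^2"
    by (rule bern_upper) (use assms in auto)
  have vp: "v powr (-s) > 0" using assms by simp
  have "(v^2+1/2) powr (-s/2) \<le> v powr (-s) * (1 - (s/2)*(1/(2* v^2)) + (s/2)*(s/2+1)/2*(1/(2* v^2))^2)"
    unfolding psi_split[OF assms(1)] using b vp by (intro mult_left_mono) auto
  also have "\<dots> = v powr (-s) - s/4 * v powr (-s-2) + s*(s+2)/32 * v powr (-s-4)"
  proof -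
    have e2: "v powr (-s-2) = v powr (-s) / v^2" using powr_minus_nat[OF assms(1), of "-s" 2] by simp
    have e4: "v powr (-s-4) = v powr (-s) / v^4" using powr_minus_nat[OF assms(1), of "-s" 4] by simp
    show ?thesis unfolding e2 e4 using assms by (simp add: field_simps power2_eq_square power4_eq_xxxx)
  qed
  finally show ?thesis .
qed

lemma psi_lower:
  fixes v s :: real
  assumes "v > 0" "s > 0"
  shows "v powr (-s) - s/4 * v powr (-s-2) \<le> (v^2+1/2) powr (-s/2)"
proof -
  have b: "1 - (s/2)*(1/(2* v^2)) \<le> (1 + 1/(2* v^2)) powr (-(s/2))"
    by (rule bern_lower) (use assms in auto)
  have vp: "v powr (-s) > 0" using assms by simp
  have "v powr (-s) - s/4 * v powr (-s-2) = v powr (-s) * (1 - (s/2)*(1/(2* v^2)))"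
    using powr_minus_nat[OF assms(1), of "-s" 2] assms
    by (simp add: field_simps power2_eq_square)
  also have "\<dots> \<le> (v^2+1/2) powr (-s/2)"
    unfolding psi_split[OF assms(1)] using b vp by (intro mult_left_mono) auto
  finally show ?thesis .
qed



lemma poch3: "pochhammer (s::real) 3 = s*(s+1)*(s+2)"
  by (simp add: numeral_eq_Suc pochhammer_Suc algebra_simps)
lemma poch5: "pochhammer (s::real) 5 = s*(s+1)*(s+2)*(s+3)*(s+4)"
  by (simp add: numeral_eq_Suc pochhammer_Suc algebra_simps)
lemma poch7: "pochhammer (s::real) 7 = s*(s+1)*(s+2)*(s+3)*(s+4)*(s+5)*(s+6)"
  by (simp add: numeral_eq_Suc pochhammer_Suc algebra_simps)

lemma final_alg:
  fixes s c C3 Q3 :: real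
  assumes s: "0 < s" "s \<le> 2/5" and c: "c \<ge> 7/2" and C3: "C3 > 0"
    and Q3: "0 \<le> Q3" "Q3 \<le> C3 * (c/(c-1))^4"
  shows "1/4 * (s*(s+1)*(s+2)) * C3 + 1/64 * (s*(s+1)*(s+2)*(s+3)*(s+4)) * (C3/c^2)
     + 1/2520 * (s*(s+1)*(s+2)*(s+3)*(s+4)*(s+5)*(s+6)) * (Q3/(c-1)^4)
     + s*(s+2)/32 * (Q3/(c-1)) \<le> 46/100 * (s*(s+2)*C3)"
proof -
  define K where "K = s*(s+2)*C3"
  have K: "K > 0" unfolding K_def using s C3 by simp
  have c1: "c - 1 > 0" using c by simp
  have r: "c/(c-1) \<le> 7/5" using c c1 by (simp add: divide_simps)
  have r0: "c/(c-1) \<ge> 0" using c1 c by simp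
  have ic: "1/(c-1) \<le> 2/5" using c c1 by (simp add: divide_simps)
  have ic0: "1/(c-1) \<ge> 0" using c1 by simp
  have icc: "1/c^2 \<le> 4/49"
  proof -
    have "(7/2)^2 \<le> c^2" using c by (intro power_mono) auto
    then show ?thesis by (simp add: divide_simps)
  qed
  have t1: "1/4 * (s*(s+1)*(s+2)) * C3 \<le> 7/20 * K"
  proof -
    have "1/4 * (s*(s+1)*(s+2)) * C3 = (s+1)/4 * K" unfolding K_def by (simp add: field_simps)
    also have "\<dots> \<le> 7/20 * K" using K s by (intro mult_right_mono) auto
    finally show ?thesis .
  qed
  have t2: "1/64 * (s*(s+1)*(s+2)*(s+3)*(s+4)) * (C3/c^2) \<le> 3/100 * K"
  proof -
    have p: "(s+1)*(s+3)*(s+4) \<le> 21"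
    proof -
      have "(s+1)*(s+3)*(s+4) \<le> (7/5)*(17/5)*(22/5)" using s
        by (intro mult_mono) (auto simp: mult_nonneg_nonneg)
      then show ?thesis by simp
    qed
    have "1/64 * (s*(s+1)*(s+2)*(s+3)*(s+4)) * (C3/c^2) = ((s+1)*(s+3)*(s+4)) * (1/c^2) / 64 * K"
      unfolding K_def using c c1 by (simp add: field_simps)
    also have "\<dots> \<le> 21 * (4/49) / 64 * K"
      using p icc K s by (intro mult_right_mono divide_right_mono mult_mono) auto
    also have "\<dots> \<le> 3/100 * K" using K by (intro mult_right_mono) (auto simp: power_divide)
    finally show ?thesis .
  qed
  have t3: "1/2520 * (s*(s+1)*(s+2)*(s+3)*(s+4)*(s+5)*(s+6)) * (Q3/(c-1)^4) \<le> 3/100 * K"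
  proof -
    have p: "(s+1)*(s+3)*(s+4)*(s+5)*(s+6) \<le> 724"
    proof -
      have "(s+1)*(s+3)*(s+4)*(s+5)*(s+6) \<le> (7/5)*(17/5)*(22/5)*(27/5)*(32/5)" using s
        by (intro mult_mono) (auto simp: mult_nonneg_nonneg)
      then show ?thesis by simp
    qed
    have q: "Q3/(c-1)^4 \<le> C3 * ((c/(c-1)) * (1/(c-1)))^4"
    proof -
      have "Q3/(c-1)^4 \<le> C3 * (c/(c-1))^4 / (c-1)^4" using Q3 c1 by (intro divide_right_mono) auto
      also have "\<dots> = C3 * ((c/(c-1)) * (1/(c-1)))^4" by (simp add: power_mult_distrib power_divide)
      finally show ?thesis .
    qed
    have rr: "((c/(c-1)) * (1/(c-1)))^4 \<le> ((7/5)*(2/5))^4"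
      using r r0 ic ic0 by (intro power_mono mult_mono) auto
    have "1/2520 * (s*(s+1)*(s+2)*(s+3)*(s+4)*(s+5)*(s+6)) * (Q3/(c-1)^4)
        = ((s+1)*(s+3)*(s+4)*(s+5)*(s+6)) / 2520 * (s*(s+2)) * (Q3/(c-1)^4)"
      by (simp add: field_simps)
    also have "\<dots> \<le> 724 / 2520 * (s*(s+2)) * (C3 * ((7/5)*(2/5))^4)"
    proof (intro mult_mono divide_right_mono)
      show "Q3 / (c - 1) ^ 4 \<le> C3 * ((7/5)*(2/5))^4"
        using q rr C3 by (meson order_trans mult_left_mono less_imp_le)
    qed (use p s Q3 c1 in auto)
    also have "\<dots> = (724/2520*((7/5)*(2/5))^4) * K" by (simp add: K_def mult_ac)
    also have "\<dots> \<le> 3/100 * K" using K by (intro mult_right_mono) (auto simp: power_divide)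
    finally show ?thesis .
  qed
  have t4: "s*(s+2)/32 * (Q3/(c-1)) \<le> 5/100 * K"
  proof -
    have q: "Q3/(c-1) \<le> C3 * ((c/(c-1))^4 * (1/(c-1)))"
    proof -
      have "Q3/(c-1) \<le> C3 * (c/(c-1))^4 / (c-1)" using Q3 c1 by (intro divide_right_mono) auto
      then show ?thesis by simp
    qed
    have rr: "(c/(c-1))^4 * (1/(c-1)) \<le> (7/5)^4 * (2/5)"
      using r r0 ic ic0 by (intro power_mono mult_mono) auto
    have "Q3/(c-1) \<le> C3 * ((7/5)^4 * (2/5))"
      using q rr C3 by (meson order_trans mult_left_mono less_imp_le)
    then have "s*(s+2)/32 * (Q3/(c-1)) \<le> s*(s+2)/32 * (C3 * ((7/5)^4 * (2/5)))"
      using s by (intro mult_left_mono) auto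
    also have "\<dots> = ((7/5)^4 * (2/5) / 32) * K" by (simp add: K_def mult_ac)
    also have "\<dots> \<le> 5/100 * K" using K by (intro mult_right_mono) (auto simp: power_divide)
    finally show ?thesis .
  qed
  show ?thesis using t1 t2 t3 t4 unfolding K_def by linarith
qed



lemma pm: fixes c a :: real assumes "c > 0" shows "c powr (a - 2) = c powr a / c^2" "c powr (a - 4) = c powr a / c^4"
  "c powr (a - 1) = c powr a / c"
  using powr_minus_nat[OF assms, of a 2] powr_minus_nat[OF assms, of a 4] powr_minus_nat[OF assms, of a 1] by simp_all

lemma locU:
  fixes s c :: real
  assumes s: "0 < s" "s \<le> 2/5" and c: "c \<ge> 7/2"
  shows "(c-1/2) powr (-s) - (c+1/2) powr (-s) < 1/2 * ((c-1) powr (-s) - (c+1) powr (-s))"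
proof -
  define P3 where "P3 = pochhammer s 3"
  define P5 where "P5 = pochhammer s 5"
  define P7 where "P7 = pochhammer s 7"
  define C1 where "C1 = c powr (-s-1)"
  define C3 where "C3 = c powr (-s-3)"
  define Q3 where "Q3 = (c-1) powr (-s-3)"
  have c0: "c > 0" "c - 1 > 0" using c by auto
  have C3p: "C3 > 0" unfolding C3_def using c0 by simp
  have Q3p: "Q3 \<ge> 0" unfolding Q3_def by simp
  have C5: "c powr (-s-5) = C3 / c^2" unfolding C3_def using pm(1)[OF c0(1), of "-s-3"] by (simp add: algebra_simps)
  have Q7: "(c-1) powr (-s-7) = Q3 / (c-1)^4" unfolding Q3_def using pm(2)[OF c0(2), of "-s-3"] by (simp add: algebra_simps)
  have Q4: "(c-1) powr (-s-4) = Q3 / (c-1)" unfolding Q3_def using pm(3)[OF c0(2), of "-s-3"] by (simp add: algebra_simps)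
  have Q3b: "Q3 \<le> C3 * (c/(c-1))^4"
  proof -
    have "Q3 = C3 * (c/(c-1)) powr (s+3)"
      unfolding Q3_def C3_def using c0
      by (simp add: powr_divide powr_minus divide_simps powr_add[symmetric])
    also have "\<dots> \<le> C3 * (c/(c-1)) powr 4"
      using C3p c0 s by (intro mult_left_mono powr_mono) (auto simp: divide_simps)
    also have "\<dots> = C3 * (c/(c-1))^4" using c0 by (simp add: powr_numeral)
    finally show ?thesis .
  qed
  obtain Ra where A: "(c-1/2) powr (-s) - (c+1/2) powr (-s) = s*C1 + P3*C3/24 + P5*(C3/c^2)/1920 + Ra"
     and Ra: "Ra \<le> P7 * (Q3/(c-1)^4) / 322560"
  proof -
    from sym7[of s "1/2" c] s c obtain R where
      "(c-1/2) powr (-s) - (c+1/2) powr (-s) = 2*(1/2)* s * c powr (-s-1)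
     + (1/2)^3/3 * pochhammer s 3 * c powr (-s-3) + (1/2)^5/60 * pochhammer s 5 * c powr (-s-5) + R"
      and R1: "R \<le> (1/2)^7/2520 * pochhammer s 7 * (c-1/2) powr (-s-7)" by auto
    have m: "(c-1/2) powr (-s-7) \<le> (c-1) powr (-s-7)"
      by (rule powr_mono2') (use s c in auto)
    have k0: "(1/2)^7/2520 * pochhammer s 7 \<ge> (0::real)" using s by (simp add: pochhammer_nonneg)
    have "(1/2)^7/2520 * pochhammer s 7 * (c-1/2) powr (-s-7) \<le> (1/2)^7/2520 * pochhammer s 7 * (c-1) powr (-s-7)"
      by (rule mult_left_mono[OF m k0])
    with R1 have "R \<le> (1/2)^7/2520 * pochhammer s 7 * (c-1) powr (-s-7)"
      by (rule order_trans)
    then show ?thesis using that[of R] \<open>(c-1/2) powr (-s) - _ = _\<close>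
      unfolding C5 Q7 P3_def P5_def P7_def C1_def C3_def by (simp add: field_simps)
  qed
  obtain Rb where B: "(c-1) powr (-s) - (c+1) powr (-s) = 2* s*C1 + P3*C3/3 + P5*(C3/c^2)/60 + Rb"
     and Rb: "0 \<le> Rb"
  proof -
    from sym7[of s 1 c] s c obtain R where
      "(c-1) powr (-s) - (c+1) powr (-s) = 2*1* s * c powr (-s-1)
     + 1^3/3 * pochhammer s 3 * c powr (-s-3) + 1^5/60 * pochhammer s 5 * c powr (-s-5) + R"
      "0 \<le> R" by auto
    then show ?thesis using that[of R] unfolding C5 Q7 P3_def P5_def P7_def C1_def C3_def by (simp add: field_simps)
  qed
  have fin: "1/4 * (s*(s+1)*(s+2)) * C3 + 1/64 * (s*(s+1)*(s+2)*(s+3)*(s+4)) * (C3/c^2)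
     + 1/2520 * (s*(s+1)*(s+2)*(s+3)*(s+4)*(s+5)*(s+6)) * (Q3/(c-1)^4)
     + s*(s+2)/32 * (Q3/(c-1)) \<le> 46/100 * (s*(s+2)*C3)"
    by (rule final_alg) (use s c C3p Q3p Q3b in auto)
  then have fin': "1/4 * P3 * C3 + 1/64 * P5 * (C3/c^2) + 1/2520 * P7 * (Q3/(c-1)^4)
     + s*(s+2)/32 * (Q3/(c-1)) \<le> 46/100 * (s*(s+2)*C3)"
    unfolding P3_def P5_def P7_def poch3 poch5 poch7 .
  have K: "s*(s+2)*C3 > 0" using s C3p by simp
  have n1: "0 \<le> 1/64 * P5 * (C3/c^2)" unfolding P5_def using s C3p c0 by (simp add: pochhammer_nonneg)
  have n2: "0 \<le> s*(s+2)/32 * (Q3/(c-1))" using s Q3p c0 by simp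
  have n3: "0 \<le> 1/2520 * P7 * (Q3/(c-1)^4)" unfolding P7_def using s Q3p c0 by (simp add: pochhammer_nonneg)
  have p3: "P3 * C3 \<ge> s*(s+2)*C3" unfolding P3_def poch3 using s C3p
    by (intro mult_right_mono) (auto simp: mult_le_cancel_left1 mult_le_cancel_right1 algebra_simps)
  have eqs: "1/4*P3*C3 = P3*C3/4" "1/64*P5*(C3/c^2) = P5*(C3/c^2)/64"
    "1/2520*P7*(Q3/(c-1)^4) = P7*(Q3/(c-1)^4)/2520" by simp_all
  define Fb where "Fb = (c-1) powr (-s) - (c+1) powr (-s)"
  define Fa where "Fa = (c-1/2) powr (-s) - (c+1/2) powr (-s)"
  have e: "Fb - 2*Fa = P3*C3/4 + P5*(C3/c^2)/64 + Rb - 2*Ra"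
    unfolding A[folded Fa_def] B[folded Fb_def] by (simp add: algebra_simps)
  define W3 where "W3 = P3*C3"
  define W5 where "W5 = P5*(C3/c^2)"
  define W7 where "W7 = P7*(Q3/(c-1)^4)"
  define E where "E = s*(s+2)/32 * (Q3/(c-1))"
  define K where "K = s*(s+2)*C3"
  have f1: "W3/4 + W5/64 + W7/2520 + E \<le> 46/100*K"
    using fin'[unfolded eqs] unfolding W3_def W5_def W7_def E_def K_def .
  have f2: "0 \<le> W5/64" "0 \<le> E" "0 \<le> W7/2520"
    using n1[unfolded eqs] n2 n3[unfolded eqs] unfolding W5_def W7_def E_def by auto
  have f3: "K \<le> W3" "0 < K" using p3 K unfolding W3_def K_def by auto
  have e': "Fb - 2*Fa = W3/4 + W5/64 + Rb - 2*Ra" using e unfolding W3_def W5_def .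
  have Ra': "Ra \<le> W7/322560" using Ra unfolding W7_def .
  have "2*Fa < Fb" using e' Ra' Rb f1 f2 f3 by linarith
  then have "Fa < 1/2*Fb" by linarith
  then show ?thesis unfolding Fa_def Fb_def .
qed

lemma locL:
  fixes s c :: real
  assumes s: "0 < s" "s \<le> 2/5" and c: "c \<ge> 7/2"
  shows "1/2 * ((c-1)^2+1/2) powr (-s/2) - 1/2 * ((c+1)^2+1/2) powr (-s/2)
           < (c-1/2) powr (-s) - (c+1/2) powr (-s)"
proof -
  define P3 where "P3 = pochhammer s 3"
  define P5 where "P5 = pochhammer s 5"
  define P7 where "P7 = pochhammer s 7"
  define C1 where "C1 = c powr (-s-1)"
  define C3 where "C3 = c powr (-s-3)"
  define Q3 where "Q3 = (c-1) powr (-s-3)"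
  have c0: "c > 0" "c - 1 > 0" using c by auto
  have C3p: "C3 > 0" unfolding C3_def using c0 by simp
  have Q3p: "Q3 \<ge> 0" unfolding Q3_def by simp
  have C5: "c powr (-s-5) = C3 / c^2" unfolding C3_def using pm(1)[OF c0(1), of "-s-3"] by (simp add: algebra_simps)
  have Q7: "(c-1) powr (-s-7) = Q3 / (c-1)^4" unfolding Q3_def using pm(2)[OF c0(2), of "-s-3"] by (simp add: algebra_simps)
  have Q4: "(c-1) powr (-s-4) = Q3 / (c-1)" unfolding Q3_def using pm(3)[OF c0(2), of "-s-3"] by (simp add: algebra_simps)
  have Q3b: "Q3 \<le> C3 * (c/(c-1))^4"
  proof -
    have "Q3 = C3 * (c/(c-1)) powr (s+3)"
      unfolding Q3_def C3_def using c0
      by (simp add: powr_divide powr_minus divide_simps powr_add[symmetric])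
    also have "\<dots> \<le> C3 * (c/(c-1)) powr 4"
      using C3p c0 s by (intro mult_left_mono powr_mono) (auto simp: divide_simps)
    also have "\<dots> = C3 * (c/(c-1))^4" using c0 by (simp add: powr_numeral)
    finally show ?thesis .
  qed
  obtain Ra where A: "(c-1/2) powr (-s) - (c+1/2) powr (-s) = s*C1 + P3*C3/24 + P5*(C3/c^2)/1920 + Ra"
     and Ra: "0 \<le> Ra"
  proof -
    from sym7[of s "1/2" c] s c obtain R where
      "(c-1/2) powr (-s) - (c+1/2) powr (-s) = 2*(1/2)* s * c powr (-s-1)
     + (1/2)^3/3 * pochhammer s 3 * c powr (-s-3) + (1/2)^5/60 * pochhammer s 5 * c powr (-s-5) + R"
      "0 \<le> R" by auto
    then show ?thesis using that[of R] unfolding C5 P3_def P5_def C1_def C3_def by (simp add: field_simps)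
  qed
  obtain Rb where B: "(c-1) powr (-s) - (c+1) powr (-s) = 2* s*C1 + P3*C3/3 + P5*(C3/c^2)/60 + Rb"
     and Rb: "Rb \<le> P7 * (Q3/(c-1)^4) / 2520"
  proof -
    from sym7[of s 1 c] s c obtain R where
      "(c-1) powr (-s) - (c+1) powr (-s) = 2*1* s * c powr (-s-1)
     + 1^3/3 * pochhammer s 3 * c powr (-s-3) + 1^5/60 * pochhammer s 5 * c powr (-s-5) + R"
      "R \<le> 1^7/2520 * pochhammer s 7 * (c-1) powr (-s-7)" by auto
    then show ?thesis using that[of R] unfolding C5 Q7 P3_def P5_def P7_def C1_def C3_def by (simp add: field_simps)
  qed
  have G: "s/4 * (c-1) powr (-s-2) - s/4 * (c+1) powr (-s-2) \<ge> 1/2 * (s*(s+2)*C3)"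
  proof -
    from sym7[of "s+2" 1 c] s c obtain R where
      e: "(c-1) powr (-(s+2)) - (c+1) powr (-(s+2)) = 2*1*(s+2) * c powr (-(s+2)-1)
     + 1^3/3 * pochhammer (s+2) 3 * c powr (-(s+2)-3) + 1^5/60 * pochhammer (s+2) 5 * c powr (-(s+2)-5) + R"
      "0 \<le> R" by auto
    have "0 \<le> 1^3/3 * pochhammer (s+2) 3 * c powr (-(s+2)-3)" using s by (simp add: pochhammer_pos less_imp_le)
    moreover have "0 \<le> 1^5/60 * pochhammer (s+2) 5 * c powr (-(s+2)-5)" using s by (simp add: pochhammer_pos less_imp_le)
    moreover have h: "c powr (-3-s) = C3" unfolding C3_def by (rule arg_cong[where f="\<lambda>x. c powr x"]) simp
    ultimately have "(c-1) powr (-s-2) - (c+1) powr (-s-2) \<ge> 2*(s+2)*C3"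
      using e by simp
    then have "s/4 * ((c-1) powr (-s-2) - (c+1) powr (-s-2)) \<ge> s/4 * (2*(s+2)*C3)"
      using s by (intro mult_left_mono) auto
    then show ?thesis by (simp add: algebra_simps)
  qed
  have psiU: "((c-1)^2+1/2) powr (-s/2) \<le> (c-1) powr (-s) - s/4 * (c-1) powr (-s-2) + s*(s+2)/32 * (Q3/(c-1))"
    using psi_upper[OF c0(2) s(1)] unfolding Q4 .
  have psiL: "(c+1) powr (-s) - s/4 * (c+1) powr (-s-2) \<le> ((c+1)^2+1/2) powr (-s/2)"
    using psi_lower[of "c+1" s] c0 s by simp
  have fin: "1/4 * (s*(s+1)*(s+2)) * C3 + 1/64 * (s*(s+1)*(s+2)*(s+3)*(s+4)) * (C3/c^2)
     + 1/2520 * (s*(s+1)*(s+2)*(s+3)*(s+4)*(s+5)*(s+6)) * (Q3/(c-1)^4)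
     + s*(s+2)/32 * (Q3/(c-1)) \<le> 46/100 * (s*(s+2)*C3)"
    by (rule final_alg) (use s c C3p Q3p Q3b in auto)
  then have fin': "1/4 * P3 * C3 + 1/64 * P5 * (C3/c^2) + 1/2520 * P7 * (Q3/(c-1)^4)
     + s*(s+2)/32 * (Q3/(c-1)) \<le> 46/100 * (s*(s+2)*C3)"
    unfolding P3_def P5_def P7_def poch3 poch5 poch7 .
  have K: "s*(s+2)*C3 > 0" using s C3p by simp
  have eqs: "1/4*P3*C3 = P3*C3/4" "1/64*P5*(C3/c^2) = P5*(C3/c^2)/64"
    "1/2520*P7*(Q3/(c-1)^4) = P7*(Q3/(c-1)^4)/2520" by simp_all
  define E where "E = s*(s+2)/32 * (Q3/(c-1))"
  define K where "K = s*(s+2)*C3"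
  define X1 where "X1 = ((c-1)^2+1/2) powr (-s/2)"
  define X2 where "X2 = ((c+1)^2+1/2) powr (-s/2)"
  define Fb where "Fb = (c-1) powr (-s) - (c+1) powr (-s)"
  define Fa where "Fa = (c-1/2) powr (-s) - (c+1/2) powr (-s)"
  have s1: "X1 - X2 \<le> Fb - K/2 + E" using psiU psiL G unfolding X1_def X2_def Fb_def K_def E_def by linarith
  have s2: "Fb - 2*Fa \<le> P3*C3/4 + P5*(C3/c^2)/64 + P7*(Q3/(c-1)^4)/2520"
  proof -
    have "Fb - 2*Fa = P3*C3/4 + P5*(C3/c^2)/64 + Rb - 2*Ra"
      unfolding A[folded Fa_def] B[folded Fb_def] by (simp add: algebra_simps)
    then show ?thesis using Ra Rb by linarith
  qed
  have s3: "P3*C3/4 + P5*(C3/c^2)/64 + P7*(Q3/(c-1)^4)/2520 + E \<le> 46/100*K"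
    using fin'[unfolded eqs] unfolding E_def K_def .
  have "X1 - X2 < 2 * Fa" using s1 s2 s3 K unfolding K_def by linarith
  then have "1/2*X1 - 1/2*X2 < Fa" by linarith
  then show ?thesis unfolding X1_def X2_def Fa_def .
qed



lemma lim_L:
  fixes s :: real and n :: nat
  assumes "s > 0" "n \<ge> 3"
  shows "(\<lambda>k. 1/2 * (real (n+2*k)^2 - real (n+2*k) + 3/4) powr (-s/2)) \<longlonglongrightarrow> 0"
proof -
  have "LIM k sequentially. (real (n+2*k)^2 - real (n+2*k) + 3/4) :> at_top"
  proof (rule filterlim_at_top_mono[OF filterlim_real_sequentially], rule always_eventually, rule allI)
    fix k :: nat
    define x where "x = real (n+2*k)"
    have x3: "x \<ge> 3" "x \<ge> real k" unfolding x_def using assms by auto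
    have "x * 3 \<le> x * x" using x3 by (intro mult_left_mono) auto
    then have "real k \<le> x^2 - x + 3/4" using x3 unfolding power2_eq_square by linarith
    then show "real k \<le> real (n+2*k)^2 - real (n+2*k) + 3/4" unfolding x_def .
  qed
  then have "(\<lambda>k. (real (n+2*k)^2 - real (n+2*k) + 3/4) powr (-s/2)) \<longlonglongrightarrow> 0"
    by (rule tendsto_neg_powr[rotated]) (use assms in simp)
  then show ?thesis using tendsto_mult_right_zero[of _ sequentially "1/2"] by simp
qed

lemma lim_U:
  fixes s :: real and n :: nat
  assumes "s > 0" "n \<ge> 3"
  shows "(\<lambda>k. 1/2 * (real (n+2*k) - 1/2) powr (-s)) \<longlonglongrightarrow> 0"
proof -
  have "LIM k sequentially. (real (n+2*k) - 1/2) :> at_top"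
  proof (rule filterlim_at_top_mono[OF filterlim_real_sequentially], rule always_eventually, rule allI)
    fix k :: nat
    show "real k \<le> real (n+2*k) - 1/2" using assms by simp
  qed
  then have "(\<lambda>k. (real (n+2*k) - 1/2) powr (-s)) \<longlonglongrightarrow> 0"
    by (rule tendsto_neg_powr[rotated]) (use assms in simp)
  then show ?thesis using tendsto_mult_right_zero[of _ sequentially "1/2"] by simp
qed

lemma step_bounds:
  fixes s :: real and n k :: nat
  assumes s: "0 < s" "s \<le> 2/5" and n: "n \<ge> 3"
  defines "x \<equiv> real (n + 2*k)"
  shows "1/2 * (x^2 - x + 3/4) powr (-s/2) - 1/2 * (real (n+2*Suc k)^2 - real (n+2*Suc k) + 3/4) powr (-s/2)
           < 1 / x powr s - 1 / real (n+2*k+1) powr s"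
    and "1 / x powr s - 1 / real (n+2*k+1) powr s
           < 1/2 * (x - 1/2) powr (-s) - 1/2 * (real (n+2*Suc k) - 1/2) powr (-s)"
proof -
  have x3: "x \<ge> 3" unfolding x_def using n by simp
  have e1: "real (n+2*Suc k) = x + 2" "real (n+2*k+1) = x + 1" unfolding x_def by simp_all
  have i1: "1 / x powr s = (x+1/2 - 1/2) powr (-s)" using x3 by (simp add: powr_minus_divide)
  have i2: "1 / (x+1) powr s = (x+1/2 + 1/2) powr (-s)" using x3 by (simp add: powr_minus_divide add.assoc)
  have q1: "x^2 - x + 3/4 = (x+1/2-1)^2 + 1/2" by (simp add: power2_eq_square algebra_simps)
  have q2: "(x+2)^2 - (x+2) + 3/4 = (x+1/2+1)^2 + 1/2" by (simp add: power2_eq_square algebra_simps)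
  have c: "x + 1/2 \<ge> 7/2" using x3 by simp
  show "1/2 * (x^2 - x + 3/4) powr (-s/2) - 1/2 * (real (n+2*Suc k)^2 - real (n+2*Suc k) + 3/4) powr (-s/2)
           < 1 / x powr s - 1 / real (n+2*k+1) powr s"
    unfolding e1 i1 i2 q1 q2 using locL[OF s c] .
  have q3: "x - 1/2 = x + 1/2 - 1" "x + 2 - 1/2 = x + 1/2 + 1" by simp_all
  show "1 / x powr s - 1 / real (n+2*k+1) powr s
           < 1/2 * (x - 1/2) powr (-s) - 1/2 * (real (n+2*Suc k) - 1/2) powr (-s)"
    unfolding e1 i1 i2 q3 using locU[OF s c] unfolding right_diff_distrib .
qed

lemma A_bounds:
  fixes s :: real and n :: nat
  assumes s: "0 < s" "s \<le> 2/5" and n: "n \<ge> 3"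
  shows "1/2 * (real n^2 - real n + 3/4) powr (-s/2) < A_ns n s"
    and "A_ns n s < 1/2 * (real n - 1/2) powr (-s)"
    and "summable (\<lambda>k. 1 / real (n+2*k) powr s - 1 / real (n+2*k+1) powr s)"
proof -
  define d where "d k = 1 / real (n+2*k) powr s - 1 / real (n+2*k+1) powr s" for k
  define L where "L k = 1/2 * (real (n+2*k)^2 - real (n+2*k) + 3/4) powr (-s/2)" for k
  define U where "U k = 1/2 * (real (n+2*k) - 1/2) powr (-s)" for k
  have A: "A_ns n s = suminf d" unfolding A_ns_def d_def by simp
  have Ls: "(\<lambda>k. L k - L (Suc k)) sums (L 0 - 0)"
    by (rule telescope_sums') (unfold L_def, rule lim_L[OF s(1) n])
  have Us: "(\<lambda>k. U k - U (Suc k)) sums (U 0 - 0)"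
    by (rule telescope_sums') (unfold U_def, rule lim_U[OF s(1) n])
  have dL: "L k - L (Suc k) < d k" for k
    unfolding L_def d_def using step_bounds(1)[OF s n, of k] by simp
  have dU: "d k < U k - U (Suc k)" for k
    unfolding U_def d_def using step_bounds(2)[OF s n, of k] by simp
  have d0: "0 \<le> d k" for k
  proof -
    have p: "0 < real (n+2*k) powr s" using n by simp
    have "real (n+2*k) powr s \<le> real (n+2*k+1) powr s" using s by (intro powr_mono2) auto
    then have "1 / real (n+2*k+1) powr s \<le> 1 / real (n+2*k) powr s"
      using p by (intro divide_left_mono) auto
    then show ?thesis unfolding d_def by simp
  qed
  have sd: "summable d"
    by (rule summable_comparison_test[OF _ sums_summable[OF Us]]) (use d0 dU in \<open>auto intro!: less_imp_le\<close>)
  have sL: "summable (\<lambda>k. L k - L (Suc k))" using Ls by (rule sums_summable)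
  have sU: "summable (\<lambda>k. U k - U (Suc k))" using Us by (rule sums_summable)
  have "0 < (\<Sum>k. d k - (L k - L (Suc k)))"
    by (rule suminf_pos) (use summable_diff[OF sd sL] dL in auto)
  also have "(\<Sum>k. d k - (L k - L (Suc k))) = suminf d - L 0"
    using suminf_diff[OF sd sL] sums_unique[OF Ls] by simp
  finally show "1/2 * (real n^2 - real n + 3/4) powr (-s/2) < A_ns n s"
    unfolding A L_def by simp
  have "0 < (\<Sum>k. (U k - U (Suc k)) - d k)"
    by (rule suminf_pos) (use summable_diff[OF sU sd] dU in auto)
  also have "(\<Sum>k. (U k - U (Suc k)) - d k) = U 0 - suminf d"
    using suminf_diff[OF sU sd] sums_unique[OF Us] by simp
  finally show "A_ns n s < 1/2 * (real n - 1/2) powr (-s)"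
    unfolding A U_def by simp
  show "summable (\<lambda>k. 1 / real (n+2*k) powr s - 1 / real (n+2*k+1) powr s)"
    using sd unfolding d_def .
qed

lemma B_eq:
  assumes "summable (\<lambda>k. 1 / real (n+2*k) powr s - 1 / real (n+2*k+1) powr s)"
  shows "B_ns n s = - A_ns n s"
proof -
  have "B_ns n s = (\<Sum>k. - (1 / real (n + 2*k) powr s - 1 / real (n + 2*k + 1) powr s))"
    unfolding B_ns_def by (simp add: algebra_simps)
  also have "\<dots> = - A_ns n s" unfolding A_ns_def by (rule suminf_minus[OF assms])
  finally show ?thesis .
qed



lemma inv_half: fixes y a :: real assumes "y > 0" shows "1 / (1/2 * y powr (-a)) = 2 * y powr a"
  using assms by (simp add: powr_minus field_simps)

lemma sq_half: fixes n :: nat assumes "n \<ge> 1"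
  shows "(real n ^ 2 - real n + 1/4) powr (s/2) = (real n - 1/2) powr s"
proof -
  have p: "real n - 1/2 > 0" using assms by simp
  have "real n ^ 2 - real n + 1/4 = (real n - 1/2) powr 2"
    using p by (simp add: powr_numeral power2_eq_square algebra_simps)
  then show ?thesis by (simp add: powr_powr)
qed

lemma main_bounds:
  fixes s :: real and n :: nat
  assumes s: "0 < s" "s \<le> 2/5" and n: "n \<ge> 3"
  shows "2 * (real n ^ 2 - real n + 1/4) powr (s/2) < 1 / A_ns n s"
    and "1 / A_ns n s < 2 * (real n ^ 2 - real n + 3/4) powr (s/2)"
proof -
  have Y1: "real n ^ 2 - real n + 3/4 > 0"
  proof -
    have "real n \<le> real n ^ 2" using n by (simp add: power2_eq_square)
    then show ?thesis by linarith
  qed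
  have Y2: "real n - 1/2 > 0" using n by simp
  have L0: "0 < 1/2 * (real n^2 - real n + 3/4) powr (-s/2)" using Y1 by simp
  have U0: "0 < 1/2 * (real n - 1/2) powr (-s)" using Y2 by simp
  note b = A_bounds[OF s n]
  have Apos: "0 < A_ns n s" using b(1) L0 by linarith
  have "1 / A_ns n s < 1 / (1/2 * (real n^2 - real n + 3/4) powr (-s/2))"
    using b(1) L0 Apos by (intro divide_strict_left_mono) (auto intro: mult_pos_pos)
  also have "\<dots> = 2 * (real n ^ 2 - real n + 3/4) powr (s/2)"
    using inv_half[OF Y1, of "s/2"] by simp
  finally show "1 / A_ns n s < 2 * (real n ^ 2 - real n + 3/4) powr (s/2)" .
  have "2 * (real n ^ 2 - real n + 1/4) powr (s/2) = 2 * (real n - 1/2) powr s"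
    using sq_half[of n s] n by simp
  also have "\<dots> = 1 / (1/2 * (real n - 1/2) powr (-s))" using inv_half[OF Y2, of s] by simp
  also have "\<dots> < 1 / A_ns n s"
    using b(1,2) L0 U0 Apos by (intro divide_strict_left_mono) (auto intro: mult_pos_pos)
  finally show "2 * (real n ^ 2 - real n + 1/4) powr (s/2) < 1 / A_ns n s" .
qed

theorem lemma4p2:
  fixes p :: nat and s :: real
  assumes "odd p" and "p \<ge> 5" and "s = 2 / real p"
  shows "(\<forall>n::nat. even n \<and> n \<ge> 4 \<longrightarrow>
            2 * (real n - 1/2) powr s = 2 * (real n ^ 2 - real n + 1/4) powr (s/2) \<and>
            2 * (real n ^ 2 - real n + 1/4) powr (s/2) < 1 / A_ns n s \<and>
            1 / A_ns n s < 2 * (real n ^ 2 - real n + 3/4) powr (s/2))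
       \<and> (\<forall>n::nat. odd n \<and> n \<ge> 3 \<longrightarrow>
            - 2 * (real n ^ 2 - real n + 3/4) powr (s/2) < 1 / B_ns n s \<and>
            1 / B_ns n s < - 2 * (real n ^ 2 - real n + 1/4) powr (s/2) \<and>
            - 2 * (real n ^ 2 - real n + 1/4) powr (s/2) = - 2 * (real n - 1/2) powr s)"
proof -
  have p5: "real p \<ge> 5" using assms(2) by simp
  have "2 / real p \<le> 2/5" using p5 by (intro divide_left_mono) auto
  moreover have "0 < 2 / real p" using p5 by simp
  ultimately have s: "0 < s" "s \<le> 2/5" using assms(3) by auto
  show ?thesis
  proof (intro conjI allI impI)
    fix n :: nat assume h: "even n \<and> n \<ge> 4"
    then have n: "n \<ge> 3" by simp
    show "2 * (real n - 1/2) powr s = 2 * (real n ^ 2 - real n + 1/4) powr (s/2)"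
      using sq_half[of n s] n by simp
    show "2 * (real n ^ 2 - real n + 1/4) powr (s/2) < 1 / A_ns n s" by (rule main_bounds(1)[OF s n])
    show "1 / A_ns n s < 2 * (real n ^ 2 - real n + 3/4) powr (s/2)" by (rule main_bounds(2)[OF s n])
  next
    fix n :: nat assume h: "odd n \<and> n \<ge> 3"
    then have n: "n \<ge> 3" by simp
    have B: "1 / B_ns n s = - (1 / A_ns n s)"
      using B_eq[OF A_bounds(3)[OF s n]] by simp
    show "- 2 * (real n ^ 2 - real n + 3/4) powr (s/2) < 1 / B_ns n s"
      using main_bounds(2)[OF s n] unfolding B by simp
    show "1 / B_ns n s < - 2 * (real n ^ 2 - real n + 1/4) powr (s/2)"
      using main_bounds(1)[OF s n] unfolding B by simp
    show "- 2 * (real n ^ 2 - real n + 1/4) powr (s/2) = - 2 * (real n - 1/2) powr s"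
      using sq_half[of n s] n by simp
  qed
qed

end
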